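(* Let $(M,J,g)$ be an $n$-dimensional metallic pseudo-Riemannian manifold with $J^2=pJ+qI$, and let $\{E_i\}_{1\le i\le n}$ be a local $g$-orthonormal frame. Then for every vector field $X$ on $M$, $$\sum_{i=1}^{n}g((dJ)(X,E_i),JE_i)=\frac{1}{2}p\sum_{i=1}^{n}g((\nabla_X J)E_i,E_i)+p\,g(X,\delta J)-g(JX,\delta J).$$
   Context: A metallic pseudo-Riemannian manifold $(M,J,g)$ is a manifold with a pseudo-Riemannian metric $g$ and a $g$-symmetric $(1,1)$-tensor field $J$ with $J^2=pJ+qI$ for real $p,q$. $\nabla$ is the Levi-Civita connection of $g$, $(dJ)(X,Y)=(\nabla_XJ)Y-(\nabla_YJ)X$, and $\delta J=-\sum_{i=1}^n(\nabla_{E_i}J)E_i$ (computed with the same frame). *)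

theory Defs
  imports "HOL-Analysis.Analysis"
begin

text \<open>Local coordinate model: a chart domain U (open subset of real^'n), a metric
  given by its component matrix g x, the (1,1)-tensor J given by its matrix J x,
  vector fields as maps real^'n => real^'n.\<close>

definition gval :: "(real^'n \<Rightarrow> real^'n^'n) \<Rightarrow> real^'n \<Rightarrow> real^'n \<Rightarrow> real^'n \<Rightarrow> real" where
  "gval g x u v = u \<bullet> (g x *v v)"

definition dmetric :: "(real^'n \<Rightarrow> real^'n^'n) \<Rightarrow> real^'n \<Rightarrow> real^'n \<Rightarrow> real^'n \<Rightarrow> real^'n \<Rightarrow> real" where
  "dmetric g x u v w = v \<bullet> ((frechet_derivative g (at x) u) *v w)"

definition christoffel_low :: "(real^'n \<Rightarrow> real^'n^'n) \<Rightarrow> real^'n \<Rightarrow> real^'n \<Rightarrow> real^'n \<Rightarrow> real^'n \<Rightarrow> real" where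
  "christoffel_low g x u v w =
     (1/2) * (dmetric g x u v w + dmetric g x v u w - dmetric g x w u v)"

definition christoffel :: "(real^'n \<Rightarrow> real^'n^'n) \<Rightarrow> real^'n \<Rightarrow> real^'n \<Rightarrow> real^'n \<Rightarrow> real^'n" where
  "christoffel g x u v = matrix_inv (g x) *v (\<chi> l. christoffel_low g x u v (axis l 1))"

definition lc_nabla :: "(real^'n \<Rightarrow> real^'n^'n) \<Rightarrow> (real^'n \<Rightarrow> real^'n) \<Rightarrow> (real^'n \<Rightarrow> real^'n) \<Rightarrow> real^'n \<Rightarrow> real^'n" where
  "lc_nabla g X Y x = frechet_derivative Y (at x) (X x) + christoffel g x (X x) (Y x)"

definition nablaJ :: "(real^'n \<Rightarrow> real^'n^'n) \<Rightarrow> (real^'n \<Rightarrow> real^'n^'n) \<Rightarrow> (real^'n \<Rightarrow> real^'n) \<Rightarrow> (real^'n \<Rightarrow> real^'n) \<Rightarrow> real^'n \<Rightarrow> real^'n" where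
  "nablaJ g J X Y x = lc_nabla g X (\<lambda>y. J y *v Y y) x - J x *v lc_nabla g X Y x"

definition dJ :: "(real^'n \<Rightarrow> real^'n^'n) \<Rightarrow> (real^'n \<Rightarrow> real^'n^'n) \<Rightarrow> (real^'n \<Rightarrow> real^'n) \<Rightarrow> (real^'n \<Rightarrow> real^'n) \<Rightarrow> real^'n \<Rightarrow> real^'n" where
  "dJ g J X Y x = nablaJ g J X Y x - nablaJ g J Y X x"

definition deltaJ :: "(real^'n \<Rightarrow> real^'n^'n) \<Rightarrow> (real^'n \<Rightarrow> real^'n^'n) \<Rightarrow> ('n \<Rightarrow> real^'n \<Rightarrow> real^'n) \<Rightarrow> real^'n \<Rightarrow> real^'n" where
  "deltaJ g J E x = - (\<Sum>i\<in>UNIV. nablaJ g J (E i) (E i) x)"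

end

theory Submission imports Defs begin

lemma bb_mv: "bounded_bilinear (\<lambda>(A::real^'n^'m) (v::real^'n). A *v v)"
  unfolding bilinear_conv_bounded_bilinear[symmetric] bilinear_def
  by (auto intro!: linearI simp: algebra_simps scaleR_matrix_vector_assoc)

lemma mv_deriv:
  fixes f :: "'a::real_normed_vector \<Rightarrow> real^'n^'m" and g :: "'a \<Rightarrow> real^'n"
  assumes "(f has_derivative f') (at x within s)" "(g has_derivative g') (at x within s)"
    "\<And>h. D h = f x *v g' h + f' h *v g x"
  shows "((\<lambda>y. f y *v g y) has_derivative D) (at x within s)"
proof -
  have "D = (\<lambda>h. f x *v g' h + f' h *v g x)" using assms(3) by auto
  then show ?thesis using bounded_bilinear.FDERIV[OF bb_mv assms(1,2)] by simp
qed

lemma inner_deriv: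
  fixes f g :: "'a::real_normed_vector \<Rightarrow> real^'n"
  assumes "(f has_derivative f') (at x within s)" "(g has_derivative g') (at x within s)"
    "\<And>h. D h = f x \<bullet> g' h + f' h \<bullet> g x"
  shows "((\<lambda>y. f y \<bullet> g y) has_derivative D) (at x within s)"
proof -
  have "D = (\<lambda>h. f x \<bullet> g' h + f' h \<bullet> g x)" using assms(3) by auto
  then show ?thesis using bounded_bilinear.FDERIV[OF bounded_bilinear_inner assms(1,2)] by simp
qed

lemma deriv_zero_open:
  assumes "(F has_derivative F') (at x)" "open U" "x \<in> U" "\<forall>y\<in>U. F y = 0"
  shows "F' h = 0"
proof -
  have "((\<lambda>y. 0) has_derivative F') (at x)"
    by (rule has_derivative_transform_within_open[OF assms(1) assms(2,3)]) (simp add: assms(4))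
  moreover have "((\<lambda>y. 0) has_derivative (\<lambda>h. 0)) (at x)" by simp
  ultimately have "F' = (\<lambda>h. 0)" by (rule has_derivative_unique)
  then show ?thesis by simp
qed

lemma sym_form:
  fixes G :: "real^'n^'n"
  assumes "transpose G = G"
  shows "a \<bullet> (G *v b) = b \<bullet> (G *v a)"
proof -
  have "a \<bullet> (G *v b) = (a v* G) \<bullet> b" by (simp add: dot_lmul_matrix)
  also have "a v* G = transpose G *v a" by simp
  finally show ?thesis using assms by (simp add: inner_commute)
qed

lemma inv_right:
  fixes G :: "real^'n^'n"
  assumes "invertible G"
  shows "G ** matrix_inv G = mat 1"
  using assms unfolding invertible_def matrix_inv_def by (rule someI_ex[THEN conjunct1])

lemma gval_add_left: "gval g x (a + b) c = gval g x a c + gval g x b c"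
  by (simp add: gval_def inner_add_left)
lemma gval_diff_left: "gval g x (a - b) c = gval g x a c - gval g x b c"
  by (simp add: gval_def inner_diff_left)
lemma gval_scale_left: "gval g x (r *\<^sub>R a) c = r * gval g x a c"
  by (simp add: gval_def)
lemma gval_add_right: "gval g x c (a + b) = gval g x c a + gval g x c b"
  by (simp add: gval_def inner_add_right matrix_vector_right_distrib)
lemma gval_diff_right: "gval g x c (a - b) = gval g x c a - gval g x c b"
  by (simp add: gval_def inner_diff_right matrix_vector_mult_diff_distrib)
lemma gval_scale_right: "gval g x c (r *\<^sub>R a) = r * gval g x c a"
  by (simp add: gval_def matrix_vector_mult_scaleR)
lemma gval_neg_right: "gval g x c (- a) = - gval g x c a"
  using gval_scale_right[of g x c "-1" a] by simp
lemma gval_sum_right: "gval g x c (\<Sum>i\<in>S. f i) = (\<Sum>i\<in>S. gval g x c (f i))"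
proof -
  have "linear (\<lambda>a. gval g x c a)" unfolding gval_def
    by (rule linearI) (simp_all add: inner_add_right matrix_vector_right_distrib matrix_vector_mult_scaleR)
  then show ?thesis by (rule linear_sum)
qed
lemma gval_sym: "transpose (g x) = g x \<Longrightarrow> gval g x a b = gval g x b a"
  unfolding gval_def by (rule sym_form)

theorem mainTheorem5:
  fixes U :: "(real^'n) set"
    and g J :: "real^'n \<Rightarrow> real^'n^'n"
    and p q :: real
    and E :: "'n \<Rightarrow> real^'n \<Rightarrow> real^'n"
    and X :: "real^'n \<Rightarrow> real^'n"
  assumes U_open: "open U"
    and g_sym: "\<forall>x\<in>U. transpose (g x) = g x"
    and g_nondeg: "\<forall>x\<in>U. invertible (g x)"
    and g_diff: "g differentiable_on U"
    and J_diff: "J differentiable_on U"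
    and J_metallic: "\<forall>x\<in>U. J x ** J x = p *\<^sub>R J x + q *\<^sub>R mat 1"
    and J_gsym: "\<forall>x\<in>U. \<forall>u v. gval g x (J x *v u) v = gval g x u (J x *v v)"
    and E_diff: "\<forall>i. E i differentiable_on U"
    and E_orth: "\<forall>x\<in>U. \<forall>i j. i \<noteq> j \<longrightarrow> gval g x (E i x) (E j x) = 0"
    and E_norm: "\<forall>x\<in>U. \<forall>i. \<bar>gval g x (E i x) (E i x)\<bar> = 1"
    and X_diff: "X differentiable_on U"
  shows "\<forall>x\<in>U.
    (\<Sum>i\<in>UNIV. gval g x (dJ g J X (E i) x) (J x *v E i x))
      = 1/2 * p * (\<Sum>i\<in>UNIV. gval g x (nablaJ g J X (E i) x) (E i x))
        + p * gval g x (X x) (deltaJ g J E x)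
        - gval g x (J x *v X x) (deltaJ g J E x)"
proof
  fix x assume xU: "x \<in> U"
  define g' where "g' = frechet_derivative g (at x)"
  define J' where "J' = frechet_derivative J (at x)"
  have diffat: "\<And>Y. Y differentiable_on U \<Longrightarrow> (Y has_derivative frechet_derivative Y (at x)) (at x)"
    using U_open xU by (metis differentiable_on_eq_differentiable_at frechet_derivative_works)
  have gd: "(g has_derivative g') (at x)" unfolding g'_def by (rule diffat[OF g_diff])
  have Jd: "(J has_derivative J') (at x)" unfolding J'_def by (rule diffat[OF J_diff])
  have glin: "linear g'" using gd has_derivative_linear by blast
  have Jlin: "linear J'" using Jd has_derivative_linear by blast
  have Gsym: "transpose (g x) = g x" using g_sym xU by blast
  have Ginv: "g x ** matrix_inv (g x) = mat 1" using g_nondeg xU inv_right by blast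
  have JJ: "\<And>z. J x *v (J x *v z) = p *\<^sub>R (J x *v z) + q *\<^sub>R z"
  proof -
    fix z :: "real^'n"
    have "J x *v (J x *v z) = (J x ** J x) *v z" by (simp add: matrix_vector_mul_assoc)
    also have "\<dots> = (p *\<^sub>R J x + q *\<^sub>R mat 1) *v z" using J_metallic xU by simp
    also have "\<dots> = p *\<^sub>R (J x *v z) + q *\<^sub>R z"
      by (simp add: matrix_vector_mult_add_rdistrib scaleR_matrix_vector_assoc[symmetric])
    finally show "J x *v (J x *v z) = p *\<^sub>R (J x *v z) + q *\<^sub>R z" .
  qed
  have D1: "\<And>v a b. a \<bullet> (g' v *v b) = b \<bullet> (g' v *v a)"
  proof -
    fix v a b :: "real^'n"
    have d1: "((\<lambda>y. g y *v b) has_derivative (\<lambda>h. g' h *v b)) (at x)"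
      by (rule mv_deriv[OF gd has_derivative_const]) simp
    have d2: "((\<lambda>y. g y *v a) has_derivative (\<lambda>h. g' h *v a)) (at x)"
      by (rule mv_deriv[OF gd has_derivative_const]) simp
    have d3: "((\<lambda>y. a \<bullet> (g y *v b)) has_derivative (\<lambda>h. a \<bullet> (g' h *v b))) (at x)"
      by (rule inner_deriv[OF has_derivative_const d1]) simp
    have d4: "((\<lambda>y. b \<bullet> (g y *v a)) has_derivative (\<lambda>h. b \<bullet> (g' h *v a))) (at x)"
      by (rule inner_deriv[OF has_derivative_const d2]) simp
    have "((\<lambda>y. a \<bullet> (g y *v b) - b \<bullet> (g y *v a)) has_derivative (\<lambda>h. a \<bullet> (g' h *v b) - b \<bullet> (g' h *v a))) (at x)"
      by (rule has_derivative_diff[OF d3 d4])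
    moreover have "\<forall>y\<in>U. a \<bullet> (g y *v b) - b \<bullet> (g y *v a) = 0"
      using g_sym sym_form by (metis diff_self)
    ultimately have "a \<bullet> (g' v *v b) - b \<bullet> (g' v *v a) = 0"
      using deriv_zero_open[OF _ U_open xU] by blast
    then show "a \<bullet> (g' v *v b) = b \<bullet> (g' v *v a)" by simp
  qed
  have D2: "\<And>v u. J' v *v (J x *v u) + J x *v (J' v *v u) = p *\<^sub>R (J' v *v u)"
  proof -
    fix v u :: "real^'n"
    have d1: "((\<lambda>y. J y *v u) has_derivative (\<lambda>h. J' h *v u)) (at x)"
      by (rule mv_deriv[OF Jd has_derivative_const]) simp
    have d2: "((\<lambda>y. J y *v (J y *v u)) has_derivative (\<lambda>h. J x *v (J' h *v u) + J' h *v (J x *v u))) (at x)"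
      by (rule mv_deriv[OF Jd d1]) simp
    have "((\<lambda>y. J y *v (J y *v u) - p *\<^sub>R (J y *v u) - q *\<^sub>R u) has_derivative
        (\<lambda>h. (J x *v (J' h *v u) + J' h *v (J x *v u)) - p *\<^sub>R (J' h *v u) - 0)) (at x)"
      by (intro has_derivative_diff d2 has_derivative_scaleR_right d1 has_derivative_const)
    moreover have "\<forall>y\<in>U. J y *v (J y *v u) - p *\<^sub>R (J y *v u) - q *\<^sub>R u = 0"
    proof
      fix y assume "y \<in> U"
      then have "J y ** J y = p *\<^sub>R J y + q *\<^sub>R mat 1" using J_metallic by blast
      then have "J y *v (J y *v u) = p *\<^sub>R (J y *v u) + q *\<^sub>R u"
        by (simp add: matrix_vector_mul_assoc matrix_vector_mult_add_rdistrib scaleR_matrix_vector_assoc[symmetric])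
      then show "J y *v (J y *v u) - p *\<^sub>R (J y *v u) - q *\<^sub>R u = 0" by simp
    qed
    ultimately have "(J x *v (J' v *v u) + J' v *v (J x *v u)) - p *\<^sub>R (J' v *v u) - 0 = 0"
      using deriv_zero_open[OF _ U_open xU] by blast
    then show "J' v *v (J x *v u) + J x *v (J' v *v u) = p *\<^sub>R (J' v *v u)"
      by (simp add: algebra_simps)
  qed
  have D3: "\<And>v u w. (J' v *v u) \<bullet> (g x *v w) + (J x *v u) \<bullet> (g' v *v w)
      - u \<bullet> (g' v *v (J x *v w)) - u \<bullet> (g x *v (J' v *v w)) = 0"
  proof -
    fix v u w :: "real^'n"
    have d1: "((\<lambda>y. J y *v u) has_derivative (\<lambda>h. J' h *v u)) (at x)"
      by (rule mv_deriv[OF Jd has_derivative_const]) simp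
    have d2: "((\<lambda>y. g y *v w) has_derivative (\<lambda>h. g' h *v w)) (at x)"
      by (rule mv_deriv[OF gd has_derivative_const]) simp
    have d3: "((\<lambda>y. J y *v w) has_derivative (\<lambda>h. J' h *v w)) (at x)"
      by (rule mv_deriv[OF Jd has_derivative_const]) simp
    have d4: "((\<lambda>y. g y *v (J y *v w)) has_derivative (\<lambda>h. g x *v (J' h *v w) + g' h *v (J x *v w))) (at x)"
      by (rule mv_deriv[OF gd d3]) simp
    have d5: "((\<lambda>y. (J y *v u) \<bullet> (g y *v w)) has_derivative (\<lambda>h. (J x *v u) \<bullet> (g' h *v w) + (J' h *v u) \<bullet> (g x *v w))) (at x)"
      by (rule inner_deriv[OF d1 d2]) simp
    have d6: "((\<lambda>y. u \<bullet> (g y *v (J y *v w))) has_derivative (\<lambda>h. u \<bullet> (g x *v (J' h *v w) + g' h *v (J x *v w)))) (at x)"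
      by (rule inner_deriv[OF has_derivative_const d4]) simp
    have "((\<lambda>y. (J y *v u) \<bullet> (g y *v w) - u \<bullet> (g y *v (J y *v w))) has_derivative
       (\<lambda>h. ((J x *v u) \<bullet> (g' h *v w) + (J' h *v u) \<bullet> (g x *v w)) - u \<bullet> (g x *v (J' h *v w) + g' h *v (J x *v w)))) (at x)"
      by (rule has_derivative_diff[OF d5 d6])
    moreover have "\<forall>y\<in>U. (J y *v u) \<bullet> (g y *v w) - u \<bullet> (g y *v (J y *v w)) = 0"
      using J_gsym unfolding gval_def by simp
    ultimately have "((J x *v u) \<bullet> (g' v *v w) + (J' v *v u) \<bullet> (g x *v w)) - u \<bullet> (g x *v (J' v *v w) + g' v *v (J x *v w)) = 0"
      using deriv_zero_open[OF _ U_open xU] by blast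
    then show "(J' v *v u) \<bullet> (g x *v w) + (J x *v u) \<bullet> (g' v *v w)
      - u \<bullet> (g' v *v (J x *v w)) - u \<bullet> (g x *v (J' v *v w)) = 0"
      by (simp add: algebra_simps inner_add_right)
  qed
  have dm: "\<And>a b c. dmetric g x a b c = b \<bullet> (g' a *v c)" unfolding dmetric_def g'_def by simp
  have CLw: "\<And>v u. linear (\<lambda>w. christoffel_low g x v u w)"
    unfolding christoffel_low_def dm
    by (rule linearI) (simp_all add: linear_add[OF glin] linear_scale[OF glin] algebra_simps
        inner_add_right matrix_vector_right_distrib matrix_vector_mult_scaleR scaleR_matrix_vector_assoc[symmetric])
  have CLu_add: "\<And>v a b w. christoffel_low g x v (a + b) w = christoffel_low g x v a w + christoffel_low g x v b w"
    unfolding christoffel_low_def dm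
    by (simp add: linear_add[OF glin] algebra_simps inner_add_right inner_add_left matrix_vector_right_distrib)
  have CLu_scale: "\<And>v r a w. christoffel_low g x v (r *\<^sub>R a) w = r * christoffel_low g x v a w"
    unfolding christoffel_low_def dm
    by (simp add: linear_scale[OF glin] algebra_simps matrix_vector_mult_scaleR scaleR_matrix_vector_assoc[symmetric])
  have Cu_add: "\<And>v a b. christoffel g x v (a + b) = christoffel g x v a + christoffel g x v b"
  proof -
    fix v a b :: "real^'n"
    have "(\<chi> l. christoffel_low g x v (a + b) (axis l 1)) = (\<chi> l. christoffel_low g x v a (axis l 1)) + (\<chi> l. christoffel_low g x v b (axis l 1))"
      by (simp add: vec_eq_iff CLu_add)
    then show "christoffel g x v (a + b) = christoffel g x v a + christoffel g x v b"
      unfolding christoffel_def by (simp add: matrix_vector_right_distrib)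
  qed
  have Cu_scale: "\<And>v r a. christoffel g x v (r *\<^sub>R a) = r *\<^sub>R christoffel g x v a"
  proof -
    fix v a :: "real^'n" and r :: real
    have "(\<chi> l. christoffel_low g x v (r *\<^sub>R a) (axis l 1)) = r *\<^sub>R (\<chi> l. christoffel_low g x v a (axis l 1))"
      by (simp add: vec_eq_iff CLu_scale)
    then show "christoffel g x v (r *\<^sub>R a) = r *\<^sub>R christoffel g x v a"
      unfolding christoffel_def by (simp add: matrix_vector_mult_scaleR)
  qed
  have C1: "\<And>v u w. gval g x (christoffel g x v u) w = christoffel_low g x v u w"
  proof -
    fix v u w :: "real^'n"
    define c where "c = (\<chi> l. christoffel_low g x v u (axis l 1))"
    have "gval g x (christoffel g x v u) w = w \<bullet> (g x *v christoffel g x v u)"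
      unfolding gval_def by (rule sym_form[OF Gsym])
    also have "g x *v christoffel g x v u = c"
      unfolding christoffel_def c_def[symmetric] by (simp add: matrix_vector_mul_assoc Ginv)
    also have "w \<bullet> c = (\<Sum>l\<in>UNIV. w $ l * christoffel_low g x v u (axis l 1))"
      by (simp add: inner_vec_def c_def)
    also have "\<dots> = christoffel_low g x v u (\<Sum>l\<in>UNIV. w $ l *\<^sub>R axis l 1)"
      by (simp add: linear_sum[OF CLw] linear_scale[OF CLw])
    also have "(\<Sum>l\<in>UNIV. w $ l *\<^sub>R axis l 1) = w"
      using basis_expansion[of w] by (simp add: scalar_mult_eq_scaleR)
    finally show "gval g x (christoffel g x v u) w = christoffel_low g x v u w" .
  qed
  have C3: "\<And>v a b. christoffel_low g x v a b + christoffel_low g x v b a = dmetric g x v a b"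
    unfolding christoffel_low_def dm using D1 by (simp add: algebra_simps)
  define A where "A = (\<lambda>v w. J' v *v w + christoffel g x v (J x *v w) - J x *v christoffel g x v w)"
  have nab: "\<And>Y Z. Y differentiable_on U \<Longrightarrow> nablaJ g J Z Y x = A (Z x) (Y x)"
  proof -
    fix Y Z :: "real^'n \<Rightarrow> real^'n"
    assume Yd: "Y differentiable_on U"
    define Y' where "Y' = frechet_derivative Y (at x)"
    have "((\<lambda>y. J y *v Y y) has_derivative (\<lambda>h. J x *v Y' h + J' h *v Y x)) (at x)"
      by (rule mv_deriv[OF Jd diffat[OF Yd, folded Y'_def]]) simp
    then have fd: "frechet_derivative (\<lambda>y. J y *v Y y) (at x) = (\<lambda>h. J x *v Y' h + J' h *v Y x)"
      by (rule frechet_derivative_at[symmetric])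
    show "nablaJ g J Z Y x = A (Z x) (Y x)"
      unfolding nablaJ_def lc_nabla_def fd A_def Y'_def[symmetric]
      by (simp add: algebra_simps matrix_vector_right_distrib)
  qed
  have S: "\<And>v u w. gval g x (A v u) w = gval g x u (A v w)"
  proof -
    fix v u w :: "real^'n"
    have e1: "gval g x (A v u) w = (J' v *v u) \<bullet> (g x *v w) + christoffel_low g x v (J x *v u) w
        - christoffel_low g x v u (J x *v w)"
      unfolding A_def gval_add_left gval_diff_left C1 using J_gsym xU
      by (simp add: C1 gval_def[of g x "J' v *v u"])
    have e2: "gval g x (A v w) u = (J' v *v w) \<bullet> (g x *v u) + christoffel_low g x v (J x *v w) u
        - christoffel_low g x v w (J x *v u)"
      unfolding A_def gval_add_left gval_diff_left C1 using J_gsym xU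
      by (simp add: C1 gval_def[of g x "J' v *v w"])
    have e3: "gval g x u (A v w) = gval g x (A v w) u" by (rule gval_sym[of g x, OF Gsym])
    have "u \<bullet> (g x *v (J' v *v w)) = (J' v *v w) \<bullet> (g x *v u)" by (rule sym_form[OF Gsym])
    then show "gval g x (A v u) w = gval g x u (A v w)"
      using e1 e2 e3 D3[of v u w] C3[of v "J x *v u" w] C3[of v u "J x *v w"] unfolding dm
      by linarith
  qed
  have P: "\<And>v u. A v (J x *v u) + J x *v A v u = p *\<^sub>R A v u"
  proof -
    fix v u :: "real^'n"
    have c1: "christoffel g x v (p *\<^sub>R (J x *v u) + q *\<^sub>R u) = p *\<^sub>R christoffel g x v (J x *v u) + q *\<^sub>R christoffel g x v u"
      by (simp add: Cu_add Cu_scale)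
    have "A v (J x *v u) + J x *v A v u
        = (J' v *v (J x *v u) + J x *v (J' v *v u)) + christoffel g x v (J x *v (J x *v u))
          - J x *v (J x *v christoffel g x v u)"
      unfolding A_def by (simp add: algebra_simps matrix_vector_right_distrib matrix_vector_mult_diff_distrib)
    also have "\<dots> = p *\<^sub>R (J' v *v u) + (p *\<^sub>R christoffel g x v (J x *v u) + q *\<^sub>R christoffel g x v u)
          - (p *\<^sub>R (J x *v christoffel g x v u) + q *\<^sub>R christoffel g x v u)"
      by (simp only: D2 JJ c1)
    also have "\<dots> = p *\<^sub>R A v u"
      unfolding A_def by (simp add: algebra_simps)
    finally show "A v (J x *v u) + J x *v A v u = p *\<^sub>R A v u" .
  qed
  have T1: "\<And>e. gval g x (A (X x) e) (J x *v e) = p / 2 * gval g x (A (X x) e) e"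
  proof -
    fix e :: "real^'n"
    have a: "gval g x (A (X x) e) (J x *v e) = gval g x (J x *v A (X x) e) e"
      using J_gsym xU by simp
    have b: "gval g x (A (X x) e) (J x *v e) = gval g x (A (X x) (J x *v e)) e"
      using S[of "X x" e "J x *v e"] gval_sym[of g x, OF Gsym] by simp
    have c: "gval g x (A (X x) (J x *v e) + J x *v A (X x) e) e = p * gval g x (A (X x) e) e"
      by (simp add: P gval_scale_left)
    show "gval g x (A (X x) e) (J x *v e) = p / 2 * gval g x (A (X x) e) e"
      using a b c unfolding gval_add_left by simp
  qed
  have T2: "\<And>e. gval g x (A e (X x)) (J x *v e) = p * gval g x (X x) (A e e) - gval g x (J x *v X x) (A e e)"
  proof -
    fix e :: "real^'n"
    have "gval g x (A e (X x)) (J x *v e) = gval g x (X x) (A e (J x *v e))" by (rule S)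
    also have "A e (J x *v e) = p *\<^sub>R A e e - J x *v A e e" using P[of e e] by (simp add: algebra_simps)
    also have "gval g x (X x) (p *\<^sub>R A e e - J x *v A e e) = p * gval g x (X x) (A e e) - gval g x (J x *v X x) (A e e)"
      using J_gsym xU by (simp add: gval_diff_right gval_scale_right)
    finally show "gval g x (A e (X x)) (J x *v e) = p * gval g x (X x) (A e e) - gval g x (J x *v X x) (A e e)" .
  qed
  have dJe: "\<And>i. dJ g J X (E i) x = A (X x) (E i x) - A (E i x) (X x)"
    unfolding dJ_def using nab E_diff X_diff by simp
  have nabE: "\<And>i. nablaJ g J X (E i) x = A (X x) (E i x)" using nab E_diff by simp
  have del: "deltaJ g J E x = - (\<Sum>i\<in>UNIV. A (E i x) (E i x))"
    unfolding deltaJ_def using nab E_diff by simp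
  show "(\<Sum>i\<in>UNIV. gval g x (dJ g J X (E i) x) (J x *v E i x))
      = 1/2 * p * (\<Sum>i\<in>UNIV. gval g x (nablaJ g J X (E i) x) (E i x))
        + p * gval g x (X x) (deltaJ g J E x)
        - gval g x (J x *v X x) (deltaJ g J E x)"
    unfolding dJe nabE del gval_diff_left T1 T2 gval_neg_right gval_sum_right
    by (simp add: sum_subtractf sum_distrib_left sum.distrib algebra_simps)
qed
end
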